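(* Let $R=\bigoplus_{s\in S}R_s$ be an $S$-graded ring inducing $S$ which is nearly epsilon-strongly graded. Then the following are equivalent: (i) $R$ is graded von Neumann regular; (ii) every principal right homogeneous ideal of $R$ is generated by a homogeneous idempotent element (and likewise for left ideals); (iii) every right ideal $I$ of $R$ generated by finitely many homogeneous elements $x_1,\dots,x_n$ such that $\deg(x_i)(\deg(x_i))^{-1}=e$ for all $i$, for some nonzero idempotent $e\in S$, is generated by a homogeneous idempotent element (and likewise for left ideals).
   Context: Rings are associative, not necessarily unital. $S$-graded ring inducing $S$: $S$ a partial groupoid, $R=\bigoplus_{s\in S}R_s$, $R_sR_t\subseteq R_{st}$ when $st$ defined, $R_sR_t\ne0$ implies $st$ defined. Convention: $0\in S$, $R_0=0$, $S\setminus\{0\}=\{s:R_s\ne0\}$, undefined products set to $0$, $0$ absorbing. $H_R=\bigcup_sR_s$; for nonzero $x\in H_R$, $\deg(x)$ is the unique $s$ with $x\in R_s$. A one-sided ideal $J$ is homogeneous if $J=\bigoplus_s(J\cap R_s)$. $S$ cancellative: $0\ne su=tu$ or $0\ne us=ut$ implies $s=t$. $I(S)$: idempotents of $S$. (LRI): for every $s\in S$ there exist $s^{-1}\in S$, $e,f\in I(S)$ with $es=sf=s$, $fs^{-1}=s^{-1}e=s^{-1}$, $ss^{-1}=e$, $s^{-1}s=f$. $R_sR_t$ denotes the additive subgroup generated by products. $R$ is nearly epsilon-strongly graded if $S$ is cancellative and satisfies (LRI), and for every $s$ and $x\in R_s$ there are $\epsilon(x)\in R_sR_{s^{-1}}$,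 $\epsilon'(x)\in R_{s^{-1}}R_s$ with $\epsilon(x)x=x=x\epsilon'(x)$. $R$ is graded von Neumann regular if $x\in xRx$ for all $x\in H_R$. *)

theory Defs
  imports Main
begin

text \<open>The ring R is the whole (not necessarily unital, associative) ring type 'a.
  The partial groupoid S (with adjoined absorbing zero z, undefined products set to z)
  is the whole type 's with multiplication m.\<close>

definition add_subgroup :: "'a::ring set \<Rightarrow> bool" where
  "add_subgroup A \<longleftrightarrow> 0 \<in> A \<and> (\<forall>x\<in>A. \<forall>y\<in>A. x + y \<in> A) \<and> (\<forall>x\<in>A. - x \<in> A)"

definition graded_ring_inducing :: "('s \<Rightarrow> 's \<Rightarrow> 's) \<Rightarrow> 's \<Rightarrow> ('s \<Rightarrow> 'a::ring set) \<Rightarrow> bool" where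
  "graded_ring_inducing m z G \<longleftrightarrow>
     (\<forall>s. m z s = z \<and> m s z = z) \<and>
     (\<forall>s. add_subgroup (G s)) \<and>
     G z = {0} \<and>
     (\<forall>s. s \<noteq> z \<longleftrightarrow> G s \<noteq> {0}) \<and>
     (\<forall>x. \<exists>F f. finite F \<and> (\<forall>s\<in>F. f s \<in> G s) \<and> x = (\<Sum>s\<in>F. f s)) \<and>
     (\<forall>F f. finite F \<and> (\<forall>s\<in>F. f s \<in> G s) \<and> (\<Sum>s\<in>F. f s) = 0 \<longrightarrow> (\<forall>s\<in>F. f s = 0)) \<and>
     (\<forall>s t. \<forall>x\<in>G s. \<forall>y\<in>G t. x * y \<in> G (m s t))"

definition cancellative :: "('s \<Rightarrow> 's \<Rightarrow> 's) \<Rightarrow> 's \<Rightarrow> bool" where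
  "cancellative m z \<longleftrightarrow>
     (\<forall>s t u. (m s u \<noteq> z \<and> m s u = m t u \<longrightarrow> s = t) \<and> (m u s \<noteq> z \<and> m u s = m u t \<longrightarrow> s = t))"

definition lri_wit :: "('s \<Rightarrow> 's \<Rightarrow> 's) \<Rightarrow> 's \<Rightarrow> 's \<Rightarrow> 's \<Rightarrow> 's \<Rightarrow> bool" where
  "lri_wit m s s' e f \<longleftrightarrow> m e e = e \<and> m f f = f \<and> m e s = s \<and> m s f = s \<and>
     m f s' = s' \<and> m s' e = s' \<and> m s s' = e \<and> m s' s = f"

definition LRI :: "('s \<Rightarrow> 's \<Rightarrow> 's) \<Rightarrow> bool" where
  "LRI m \<longleftrightarrow> (\<forall>s. \<exists>s' e f. lri_wit m s s' e f)"

text \<open>s^{-1} (unique under cancellativity and (LRI)).\<close>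
definition ginv :: "('s \<Rightarrow> 's \<Rightarrow> 's) \<Rightarrow> 's \<Rightarrow> 's" where
  "ginv m s = (THE s'. \<exists>e f. lri_wit m s s' e f)"

definition prodset :: "'a::ring set \<Rightarrow> 'a set \<Rightarrow> 'a set" where
  "prodset A B = {sum_list (map (\<lambda>(a, b). a * b) ps) | ps. set ps \<subseteq> A \<times> B}"

definition nearly_eps_strongly_graded :: "('s \<Rightarrow> 's \<Rightarrow> 's) \<Rightarrow> 's \<Rightarrow> ('s \<Rightarrow> 'a::ring set) \<Rightarrow> bool" where
  "nearly_eps_strongly_graded m z G \<longleftrightarrow>
     graded_ring_inducing m z G \<and> cancellative m z \<and> LRI m \<and>
     (\<forall>s. \<forall>x\<in>G s.
        (\<exists>a\<in>prodset (G s) (G (ginv m s)). a * x = x) \<and>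
        (\<exists>b\<in>prodset (G (ginv m s)) (G s). x * b = x))"

definition homog :: "('s \<Rightarrow> 'a::ring set) \<Rightarrow> 'a set" where
  "homog G = (\<Union>s. G s)"

definition deg :: "('s \<Rightarrow> 'a::ring set) \<Rightarrow> 'a \<Rightarrow> 's" where
  "deg G x = (THE s. x \<in> G s)"

definition right_ideal :: "'a::ring set \<Rightarrow> bool" where
  "right_ideal J \<longleftrightarrow> add_subgroup J \<and> (\<forall>x\<in>J. \<forall>r. x * r \<in> J)"

definition left_ideal :: "'a::ring set \<Rightarrow> bool" where
  "left_ideal J \<longleftrightarrow> add_subgroup J \<and> (\<forall>x\<in>J. \<forall>r. r * x \<in> J)"

definition rideal_gen :: "'a::ring set \<Rightarrow> 'a set" where
  "rideal_gen X = \<Inter>{J. right_ideal J \<and> X \<subseteq> J}"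

definition lideal_gen :: "'a::ring set \<Rightarrow> 'a set" where
  "lideal_gen X = \<Inter>{J. left_ideal J \<and> X \<subseteq> J}"

definition graded_von_neumann_regular :: "('s \<Rightarrow> 'a::ring set) \<Rightarrow> bool" where
  "graded_von_neumann_regular G \<longleftrightarrow> (\<forall>x\<in>homog G. \<exists>r. x = x * r * x)"

end

theory Submission
  imports Defs
begin

lemma asg_sum:
  assumes "add_subgroup A" "finite F" "\<And>i. i \<in> F \<Longrightarrow> g i \<in> A"
  shows "sum g F \<in> A"
  using assms(2,3)
proof (induction F rule: finite_induct)
  case empty then show ?case using assms(1) by (simp add: add_subgroup_def)
next
  case (insert a F) then show ?case using assms(1) by (simp add: add_subgroup_def)
qed

lemma asg_diff: "add_subgroup A \<Longrightarrow> x \<in> A \<Longrightarrow> y \<in> A \<Longrightarrow> x - y \<in> A"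
  unfolding add_subgroup_def by (metis diff_conv_add_uminus)

lemma asg_add: "add_subgroup A \<Longrightarrow> x \<in> A \<Longrightarrow> y \<in> A \<Longrightarrow> x + y \<in> A"
  unfolding add_subgroup_def by blast

lemma asg_neg: "add_subgroup A \<Longrightarrow> x \<in> A \<Longrightarrow> - x \<in> A"
  unfolding add_subgroup_def by blast

lemma asg_zero: "add_subgroup A \<Longrightarrow> 0 \<in> A"
  unfolding add_subgroup_def by blast

lemma rg_ideal: "right_ideal (rideal_gen Y)"
  unfolding rideal_gen_def right_ideal_def add_subgroup_def by auto

lemma rg_sub: "Y \<subseteq> rideal_gen Y" unfolding rideal_gen_def by auto

lemma rg_least: "right_ideal J \<Longrightarrow> Y \<subseteq> J \<Longrightarrow> rideal_gen Y \<subseteq> J"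
  unfolding rideal_gen_def by auto

lemma rg_mono: "Y \<subseteq> Z \<Longrightarrow> rideal_gen Y \<subseteq> rideal_gen Z"
  unfolding rideal_gen_def by auto

lemma ri_mult: "right_ideal J \<Longrightarrow> x \<in> J \<Longrightarrow> x * r \<in> J"
  unfolding right_ideal_def by blast
lemma ri_add: "right_ideal J \<Longrightarrow> x \<in> J \<Longrightarrow> y \<in> J \<Longrightarrow> x + y \<in> J"
  unfolding right_ideal_def using asg_add by blast
lemma ri_diff: "right_ideal J \<Longrightarrow> x \<in> J \<Longrightarrow> y \<in> J \<Longrightarrow> x - y \<in> J"
  unfolding right_ideal_def using asg_diff by blast
lemma ri_zero: "right_ideal J \<Longrightarrow> 0 \<in> J"
  unfolding right_ideal_def using asg_zero by blast

lemma lg_ideal: "left_ideal (lideal_gen Y)"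
  unfolding lideal_gen_def left_ideal_def add_subgroup_def by auto

lemma lg_sub: "Y \<subseteq> lideal_gen Y" unfolding lideal_gen_def by auto

lemma lg_least: "left_ideal J \<Longrightarrow> Y \<subseteq> J \<Longrightarrow> lideal_gen Y \<subseteq> J"
  unfolding lideal_gen_def by auto

lemma lg_mono: "Y \<subseteq> Z \<Longrightarrow> lideal_gen Y \<subseteq> lideal_gen Z"
  unfolding lideal_gen_def by auto

lemma li_mult: "left_ideal J \<Longrightarrow> x \<in> J \<Longrightarrow> r * x \<in> J"
  unfolding left_ideal_def by blast
lemma li_add: "left_ideal J \<Longrightarrow> x \<in> J \<Longrightarrow> y \<in> J \<Longrightarrow> x + y \<in> J"
  unfolding left_ideal_def using asg_add by blast
lemma li_diff: "left_ideal J \<Longrightarrow> x \<in> J \<Longrightarrow> y \<in> J \<Longrightarrow> x - y \<in> J"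
  unfolding left_ideal_def using asg_diff by blast
lemma li_zero: "left_ideal J \<Longrightarrow> 0 \<in> J"
  unfolding left_ideal_def using asg_zero by blast

lemma principal_right:
  fixes x :: "'a::ring"
  assumes "x * b = x"
  shows "right_ideal {x * c | c. True}" "x \<in> {x * c | c. True}"
proof -
  show "right_ideal {x * c | c. True}"
    unfolding right_ideal_def add_subgroup_def
  proof (intro conjI ballI allI)
    show "0 \<in> {x * c | c. True}" by (rule CollectI, rule exI[of _ 0]) simp
  next
    fix a y assume "a \<in> {x * c | c. True}" "y \<in> {x * c | c. True}"
    then obtain c d where "a = x * c" "y = x * d" by blast
    then have "a + y = x * (c + d)" by (simp add: distrib_left)
    then show "a + y \<in> {x * c | c. True}" by blast
  next
    fix a assume "a \<in> {x * c | c. True}"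
    then obtain c where "a = x * c" by blast
    then have "- a = x * (- c)" by simp
    then show "- a \<in> {x * c | c. True}" by blast
  next
    fix a r assume "a \<in> {x * c | c. True}"
    then obtain c where "a = x * c" by blast
    then have "a * r = x * (c * r)" by (simp add: mult.assoc)
    then show "a * r \<in> {x * c | c. True}" by blast
  qed
  show "x \<in> {x * c | c. True}" using assms by (metis (mono_tags, lifting) CollectI)
qed

lemma principal_left:
  fixes x :: "'a::ring"
  assumes "b * x = x"
  shows "left_ideal {c * x | c. True}" "x \<in> {c * x | c. True}"
proof -
  show "left_ideal {c * x | c. True}"
    unfolding left_ideal_def add_subgroup_def
  proof (intro conjI ballI allI)
    show "0 \<in> {c * x | c. True}" by (rule CollectI, rule exI[of _ 0]) simp
  next
    fix a y assume "a \<in> {c * x | c. True}" "y \<in> {c * x | c. True}"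
    then obtain c d where "a = c * x" "y = d * x" by blast
    then have "a + y = (c + d) * x" by (simp add: distrib_right)
    then show "a + y \<in> {c * x | c. True}" by blast
  next
    fix a assume "a \<in> {c * x | c. True}"
    then obtain c where "a = c * x" by blast
    then have "- a = (- c) * x" by simp
    then show "- a \<in> {c * x | c. True}" by blast
  next
    fix a r assume "a \<in> {c * x | c. True}"
    then obtain c where "a = c * x" by blast
    then have "r * a = (r * c) * x" by (simp add: mult.assoc)
    then show "r * a \<in> {c * x | c. True}" by blast
  qed
  show "x \<in> {c * x | c. True}" using assms by (metis (mono_tags, lifting) CollectI)
qed

context
  fixes m :: "'s \<Rightarrow> 's \<Rightarrow> 's" and z :: 's and G :: "'s \<Rightarrow> 'a::ring set"
  assumes N: "nearly_eps_strongly_graded m z G"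
begin

lemma NN: "graded_ring_inducing m z G \<and> cancellative m z \<and> LRI m"
  using N unfolding nearly_eps_strongly_graded_def by (elim conjE) (intro conjI)
lemma GR: "graded_ring_inducing m z G" using NN by (elim conjE)
lemma canc: "cancellative m z" using NN by (elim conjE)
lemma lri: "LRI m" using NN by (elim conjE)
lemmas GRd = GR[unfolded graded_ring_inducing_def]
lemma asgG: "add_subgroup (G s)"
  using GRd[THEN conjunct2, THEN conjunct1] by (rule spec)
lemma Gz: "G z = {0}"
  using GRd[THEN conjunct2, THEN conjunct2, THEN conjunct1] .
lemma mz: "m z s = z" "m s z = z"
  using GRd[THEN conjunct1, THEN spec[of _ s]] by simp_all
lemma Gmul: "x \<in> G s \<Longrightarrow> y \<in> G t \<Longrightarrow> x * y \<in> G (m s t)"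
  using GRd[THEN conjunct2, THEN conjunct2, THEN conjunct2, THEN conjunct2, THEN conjunct2, THEN conjunct2] by blast
lemma decomp: "\<exists>F f. finite F \<and> (\<forall>s\<in>F. f s \<in> G s) \<and> x = (\<Sum>s\<in>F. f s)"
  using GRd[THEN conjunct2, THEN conjunct2, THEN conjunct2, THEN conjunct2, THEN conjunct1] by (rule spec)
lemma indep: "finite F \<Longrightarrow> (\<forall>s\<in>F. f s \<in> G s) \<Longrightarrow> (\<Sum>s\<in>F. f s) = 0 \<Longrightarrow> s \<in> F \<Longrightarrow> f s = 0"
  using GRd[THEN conjunct2, THEN conjunct2, THEN conjunct2, THEN conjunct2, THEN conjunct2, THEN conjunct1] by blast
lemma zeroG: "0 \<in> G s"
  using asg_zero[OF asgG] .
lemma nz_deg: "x \<in> G s \<Longrightarrow> x \<noteq> 0 \<Longrightarrow> s \<noteq> z"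
  using Gz by auto

lemma deg_uniq:
  assumes a: "x \<in> G s" "x \<in> G t" "x \<noteq> 0"
  shows "s = t"
proof (rule ccontr)
  assume st: "s \<noteq> t"
  let ?f = "\<lambda>c. if c = s then x else - x"
  have "?f s = 0"
    by (rule indep[of "{s,t}"]) (use a st asg_neg[OF asgG] in auto)
  then show False using a by simp
qed

lemma degI: "x \<in> G s \<Longrightarrow> x \<noteq> 0 \<Longrightarrow> deg G x = s"
  unfolding deg_def by (rule the_equality) (auto dest: deg_uniq)

lemma wit_uniq:
  assumes s: "s \<noteq> z" and A: "lri_wit m s a e1 f1" and B: "lri_wit m s b e2 f2"
  shows "a = b"
proof -
  have 1: "m (m s a) s = s" "m (m s b) s = s" using A B unfolding lri_wit_def by auto
  have c: "\<And>p q u. m p u \<noteq> z \<and> m p u = m q u \<longrightarrow> p = q"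
          "\<And>p q u. m u p \<noteq> z \<and> m u p = m u q \<longrightarrow> p = q"
    using canc unfolding cancellative_def by blast+
  have "m s a = m s b" using c(1)[of "m s a" s "m s b"] 1 s by auto
  moreover have "m s a \<noteq> z" using 1 s mz by metis
  ultimately show "a = b" using c(2)[of s a b] by auto
qed

lemma ginv_wit: "s \<noteq> z \<Longrightarrow> \<exists>e f. lri_wit m s (ginv m s) e f"
proof -
  assume s: "s \<noteq> z"
  obtain a e f where w: "lri_wit m s a e f" using lri unfolding LRI_def by blast
  have "ginv m s = a" unfolding ginv_def
    apply (rule the_equality)
    using w apply blast
    using wit_uniq[OF s] w by blast
  then show ?thesis using w by blast
qed

lemma component:
  assumes "finite F" "\<And>t. t \<in> F \<Longrightarrow> g t \<in> G (d t)" "y \<in> G c" "(\<Sum>t\<in>F. g t) = y"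
  shows "(\<Sum>t\<in>{t\<in>F. d t = c}. g t) = y"
proof -
  define D where "D = insert c (d ` F)"
  define h where "h c' = (\<Sum>t\<in>{t\<in>F. d t = c'}. g t) - (if c' = c then y else 0)" for c'
  have fD: "finite D" using assms(1) by (simp add: D_def)
  have hG: "\<forall>c'\<in>D. h c' \<in> G c'"
  proof
    fix c' assume "c' \<in> D"
    have "(\<Sum>t\<in>{t\<in>F. d t = c'}. g t) \<in> G c'"
      by (rule asg_sum[OF asgG]) (use assms in auto)
    moreover have "(if c' = c then y else 0) \<in> G c'" using assms(3) zeroG by auto
    ultimately show "h c' \<in> G c'" unfolding h_def by (rule asg_diff[OF asgG])
  qed
  have "(\<Sum>c'\<in>D. \<Sum>t\<in>{t\<in>F. d t = c'}. g t) = (\<Sum>t\<in>F. g t)"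
    by (rule sum.group) (use fD assms(1) in \<open>auto simp: D_def\<close>)
  moreover have "(\<Sum>c'\<in>D. (if c' = c then y else 0)) = y" using fD by (simp add: D_def)
  ultimately have "(\<Sum>c'\<in>D. h c') = 0" unfolding h_def using assms(4) by (simp add: sum_subtractf)
  then have "h c = 0" using indep[OF fD hG] by (simp add: D_def)
  then show ?thesis by (simp add: h_def)
qed

lemma hextr:
  assumes x: "x \<in> G s" and r: "x = x * r * x"
  shows "\<exists>r'\<in>G (ginv m s). x = x * r' * x"
proof (cases "x = 0")
  case True then show ?thesis using zeroG by auto
next
  case False
  then have s: "s \<noteq> z" using nz_deg x by blast
  obtain e f where w: "lri_wit m s (ginv m s) e f" using ginv_wit[OF s] by blast
  let ?s' = "ginv m s"
  obtain F fr where F: "finite F" "\<forall>t\<in>F. fr t \<in> G t" "r = (\<Sum>t\<in>F. fr t)"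
    using decomp by blast
  have "x * r * x = (\<Sum>t\<in>F. x * fr t * x)" unfolding F(3)
    by (simp add: sum_distrib_left sum_distrib_right)
  then have sum: "(\<Sum>t\<in>F. x * fr t * x) = x" using r by simp
  have comp: "(\<Sum>t\<in>{t\<in>F. m (m s t) s = s}. x * fr t * x) = x"
    by (rule component[of F "\<lambda>t. x * fr t * x" "\<lambda>t. m (m s t) s", OF F(1) _ x sum])
       (use F(2) x Gmul in blast)
  have c: "\<And>p q u. m p u \<noteq> z \<and> m p u = m q u \<longrightarrow> p = q"
          "\<And>p q u. m u p \<noteq> z \<and> m u p = m u q \<longrightarrow> p = q"
    using canc unfolding cancellative_def by blast+
  have sub: "{t\<in>F. m (m s t) s = s} \<subseteq> {?s'}"
  proof
    fix t assume t: "t \<in> {t\<in>F. m (m s t) s = s}"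
    have 1: "m (m s t) s = s" "m (m s ?s') s = s" using t w unfolding lri_wit_def by auto
    have "m s t = m s ?s'" using c(1)[of "m s t" s "m s ?s'"] 1 s by auto
    moreover have "m s t \<noteq> z" using 1 s mz by metis
    ultimately have "t = ?s'" using c(2)[of s t ?s'] by auto
    then show "t \<in> {?s'}" by simp
  qed
  define r' where "r' = (if ?s' \<in> F then fr ?s' else 0)"
  have "{t\<in>F. m (m s t) s = s} = (if ?s' \<in> F then {?s'} else {})"
    using sub w unfolding lri_wit_def by auto
  then have "x = x * r' * x" using comp by (auto simp: r'_def split: if_splits)
  moreover have "r' \<in> G ?s'" using F(2) zeroG by (auto simp: r'_def)
  ultimately show ?thesis by blast
qed

lemma iiiR_ind:
  assumes vnr: "graded_von_neumann_regular G"
  shows "finite X \<Longrightarrow> X \<subseteq> homog G \<Longrightarrow> (\<forall>x\<in>X. x \<noteq> 0 \<longrightarrow> m (deg G x) (ginv m (deg G x)) = e)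
     \<Longrightarrow> \<exists>u\<in>G e. u * u = u \<and> rideal_gen X = rideal_gen {u}"
proof (induction X rule: finite_induct)
  case empty
  have "rideal_gen {} = rideal_gen {0::'a}"
  proof
    show "rideal_gen {} \<subseteq> rideal_gen {0}" by (rule rg_mono) simp
    show "rideal_gen {0} \<subseteq> rideal_gen {}"
      by (rule rg_least[OF rg_ideal]) (use ri_zero[OF rg_ideal] in simp)
  qed
  then show ?case using zeroG[of e] by (intro bexI[of _ 0]) auto
next
  case (insert x X0)
  obtain u1 where u1: "u1 \<in> G e" "u1 * u1 = u1" "rideal_gen X0 = rideal_gen {u1}"
    using insert by auto
  show ?case
  proof (cases "x = 0")
    case True
    have "rideal_gen (insert x X0) = rideal_gen X0"
    proof
      show "rideal_gen (insert x X0) \<subseteq> rideal_gen X0"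
        using True rg_sub[of X0] ri_zero[OF rg_ideal] by (intro rg_least[OF rg_ideal]) auto
      show "rideal_gen X0 \<subseteq> rideal_gen (insert x X0)" by (rule rg_mono) auto
    qed
    then show ?thesis using u1 by auto
  next
    case False
    obtain s where xs: "x \<in> G s" using insert.prems unfolding homog_def by auto
    have s: "s \<noteq> z" using nz_deg xs False by blast
    have dx: "deg G x = s" using degI xs False by blast
    have es: "m s (ginv m s) = e" using insert.prems(2) False dx by auto
    obtain e' f where w: "lri_wit m s (ginv m s) e' f" using ginv_wit[OF s] by blast
    have mes: "m e s = s" using w es unfolding lri_wit_def by auto
    have ee: "m e e = e" using w es unfolding lri_wit_def by auto
    define x' where "x' = x - u1 * x"
    have "u1 * x \<in> G s" using Gmul[OF u1(1) xs] mes by simp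
    then have x'G: "x' \<in> G s" unfolding x'_def using asg_diff[OF asgG] xs by blast
    obtain r where "x' = x' * r * x'"
      using vnr x'G unfolding graded_von_neumann_regular_def homog_def by blast
    then obtain r' where r': "r' \<in> G (ginv m s)" "x' = x' * r' * x'" using hextr[OF x'G] by blast
    define v where "v = x' * r'"
    have vG: "v \<in> G e" using Gmul[OF x'G r'(1)] es v_def by simp
    have x'v: "x' = v * x'" unfolding v_def by (rule r'(2))
    have vv: "v * v = v" using r'(2) v_def by (metis mult.assoc)
    have u1x': "u1 * x' = 0" unfolding x'_def using u1(2)
      by (simp add: right_diff_distrib mult.assoc[symmetric])
    have u1v: "u1 * v = 0" unfolding v_def using u1x' by (simp add: mult.assoc[symmetric])
    define w where "w = u1 + v - v * u1"
    have wu1: "w * u1 = u1" unfolding w_def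
      by (simp add: distrib_right left_diff_distrib mult.assoc u1(2))
    have wv: "w * v = v" unfolding w_def
      by (simp add: distrib_right left_diff_distrib mult.assoc u1v vv)
    have "w * w = w * u1 + w * v - w * v * u1" unfolding w_def
      by (simp add: algebra_simps)
    then have ww: "w * w = w" using wu1 wv by (simp add: w_def)
    have "v * u1 \<in> G e" using Gmul[OF vG u1(1)] ee by simp
    then have wG: "w \<in> G e" unfolding w_def
      using asg_diff[OF asgG] asg_add[OF asgG] u1(1) vG by blast
    let ?I = "rideal_gen (insert x X0)"
    have I: "right_ideal ?I" by (rule rg_ideal)
    have xI: "x \<in> ?I" using rg_sub by blast
    have "u1 \<in> rideal_gen X0" using u1(3) rg_sub by blast
    then have u1I: "u1 \<in> ?I" using rg_mono[of X0 "insert x X0"] by blast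
    have x'I: "x' \<in> ?I" unfolding x'_def by (rule ri_diff[OF I xI ri_mult[OF I u1I]])
    have vI: "v \<in> ?I" unfolding v_def by (rule ri_mult[OF I x'I])
    have wI: "w \<in> ?I" unfolding w_def
      by (rule ri_diff[OF I ri_add[OF I u1I vI] ri_mult[OF I vI]])
    let ?J = "rideal_gen {w}"
    have J: "right_ideal ?J" by (rule rg_ideal)
    have wJ: "w \<in> ?J" using rg_sub by blast
    have u1J: "u1 \<in> ?J" using ri_mult[OF J wJ, of u1] wu1 by simp
    have vJ: "v \<in> ?J" using ri_mult[OF J wJ, of v] wv by simp
    have x'J: "x' \<in> ?J" using ri_mult[OF J vJ, of x'] x'v by simp
    have "x' + u1 * x = x" unfolding x'_def by simp
    then have xJ: "x \<in> ?J" using ri_add[OF J x'J ri_mult[OF J u1J, of x]] by simp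
    have "rideal_gen {u1} \<subseteq> ?J" by (rule rg_least[OF J]) (use u1J in simp)
    then have "X0 \<subseteq> ?J" using u1(3) rg_sub[of X0] by blast
    then have "?I \<subseteq> ?J" using xJ by (intro rg_least[OF J]) auto
    moreover have "?J \<subseteq> ?I" by (rule rg_least[OF I]) (use wI in simp)
    ultimately show ?thesis using wG ww by blast
  qed
qed

lemma iiiL_ind:
  assumes vnr: "graded_von_neumann_regular G"
  shows "finite X \<Longrightarrow> X \<subseteq> homog G \<Longrightarrow> (\<forall>x\<in>X. x \<noteq> 0 \<longrightarrow> m (ginv m (deg G x)) (deg G x) = e)
     \<Longrightarrow> \<exists>u\<in>G e. u * u = u \<and> lideal_gen X = lideal_gen {u}"
proof (induction X rule: finite_induct)
  case empty
  have "lideal_gen {} = lideal_gen {0::'a}"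
  proof
    show "lideal_gen {} \<subseteq> lideal_gen {0}" by (rule lg_mono) simp
    show "lideal_gen {0} \<subseteq> lideal_gen {}"
      by (rule lg_least[OF lg_ideal]) (use li_zero[OF lg_ideal] in simp)
  qed
  then show ?case using zeroG[of e] by (intro bexI[of _ 0]) auto
next
  case (insert x X0)
  obtain u1 where u1: "u1 \<in> G e" "u1 * u1 = u1" "lideal_gen X0 = lideal_gen {u1}"
    using insert by auto
  show ?case
  proof (cases "x = 0")
    case True
    have "lideal_gen (insert x X0) = lideal_gen X0"
    proof
      show "lideal_gen (insert x X0) \<subseteq> lideal_gen X0"
        using True lg_sub[of X0] li_zero[OF lg_ideal] by (intro lg_least[OF lg_ideal]) auto
      show "lideal_gen X0 \<subseteq> lideal_gen (insert x X0)" by (rule lg_mono) auto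
    qed
    then show ?thesis using u1 by auto
  next
    case False
    obtain s where xs: "x \<in> G s" using insert.prems unfolding homog_def by auto
    have s: "s \<noteq> z" using nz_deg xs False by blast
    have dx: "deg G x = s" using degI xs False by blast
    have es: "m (ginv m s) s = e" using insert.prems(2) False dx by auto
    obtain e' f where w: "lri_wit m s (ginv m s) e' f" using ginv_wit[OF s] by blast
    have mes: "m s e = s" using w es unfolding lri_wit_def by auto
    have ee: "m e e = e" using w es unfolding lri_wit_def by auto
    define x' where "x' = x - x * u1"
    have "x * u1 \<in> G s" using Gmul[OF xs u1(1)] mes by simp
    then have x'G: "x' \<in> G s" unfolding x'_def using asg_diff[OF asgG] xs by blast
    obtain r where "x' = x' * r * x'"
      using vnr x'G unfolding graded_von_neumann_regular_def homog_def by blast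
    then obtain r' where r': "r' \<in> G (ginv m s)" "x' = x' * r' * x'" using hextr[OF x'G] by blast
    define v where "v = r' * x'"
    have vG: "v \<in> G e" using Gmul[OF r'(1) x'G] es v_def by simp
    have x'v: "x' = x' * v" unfolding v_def using r'(2) by (metis mult.assoc)
    have vv: "v * v = v" using r'(2) v_def by (metis mult.assoc)
    have x'u1: "x' * u1 = 0" unfolding x'_def using u1(2)
      by (simp add: left_diff_distrib mult.assoc)
    have vu1: "v * u1 = 0" unfolding v_def using x'u1 by (simp add: mult.assoc)
    define w where "w = u1 + v - u1 * v"
    have u1w: "u1 * w = u1" unfolding w_def
      by (simp add: distrib_left right_diff_distrib mult.assoc[symmetric] u1(2))
    have vw: "v * w = v" unfolding w_def
      by (simp add: distrib_left right_diff_distrib mult.assoc[symmetric] vu1 vv)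
    have "w * w = u1 * w + v * w - u1 * (v * w)" unfolding w_def
      by (simp add: algebra_simps)
    then have ww: "w * w = w" using u1w vw by (simp add: w_def)
    have "u1 * v \<in> G e" using Gmul[OF u1(1) vG] ee by simp
    then have wG: "w \<in> G e" unfolding w_def
      using asg_diff[OF asgG] asg_add[OF asgG] u1(1) vG by blast
    let ?I = "lideal_gen (insert x X0)"
    have I: "left_ideal ?I" by (rule lg_ideal)
    have xI: "x \<in> ?I" using lg_sub by blast
    have "u1 \<in> lideal_gen X0" using u1(3) lg_sub by blast
    then have u1I: "u1 \<in> ?I" using lg_mono[of X0 "insert x X0"] by blast
    have x'I: "x' \<in> ?I" unfolding x'_def by (rule li_diff[OF I xI li_mult[OF I u1I]])
    have vI: "v \<in> ?I" unfolding v_def by (rule li_mult[OF I x'I])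
    have wI: "w \<in> ?I" unfolding w_def
      by (rule li_diff[OF I li_add[OF I u1I vI] li_mult[OF I vI]])
    let ?J = "lideal_gen {w}"
    have J: "left_ideal ?J" by (rule lg_ideal)
    have wJ: "w \<in> ?J" using lg_sub by blast
    have u1J: "u1 \<in> ?J" using li_mult[OF J wJ, of u1] u1w by simp
    have vJ: "v \<in> ?J" using li_mult[OF J wJ, of v] vw by simp
    have x'J: "x' \<in> ?J" using li_mult[OF J vJ, of x'] x'v by simp
    have "x' + x * u1 = x" unfolding x'_def by simp
    then have xJ: "x \<in> ?J" using li_add[OF J x'J li_mult[OF J u1J, of x]] by simp
    have "lideal_gen {u1} \<subseteq> ?J" by (rule lg_least[OF J]) (use u1J in simp)
    then have "X0 \<subseteq> ?J" using u1(3) lg_sub[of X0] by blast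
    then have "?I \<subseteq> ?J" using xJ by (intro lg_least[OF J]) auto
    moreover have "?J \<subseteq> ?I" by (rule lg_least[OF I]) (use wI in simp)
    ultimately show ?thesis using wG ww by blast
  qed
qed

lemma homogI: "x \<in> G s \<Longrightarrow> x \<in> homog G" unfolding homog_def by blast

lemma i_iiiR:
  assumes "graded_von_neumann_regular G"
  shows "\<forall>e X. m e e = e \<and> e \<noteq> z \<and> finite X \<and> X \<subseteq> homog G \<and>
                 (\<forall>x\<in>X. x \<noteq> 0 \<longrightarrow> m (deg G x) (ginv m (deg G x)) = e) \<longrightarrow>
                 (\<exists>u\<in>homog G. u * u = u \<and> rideal_gen X = rideal_gen {u})"
proof (intro allI impI)
  fix e X
  assume h: "m e e = e \<and> e \<noteq> z \<and> finite X \<and> X \<subseteq> homog G \<and>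
                 (\<forall>x\<in>X. x \<noteq> 0 \<longrightarrow> m (deg G x) (ginv m (deg G x)) = e)"
  then have "finite X" "X \<subseteq> homog G" "\<forall>x\<in>X. x \<noteq> 0 \<longrightarrow> m (deg G x) (ginv m (deg G x)) = e" by simp_all
  from iiiR_ind[OF assms this] obtain u where "u \<in> G e" "u * u = u" "rideal_gen X = rideal_gen {u}" by (elim bexE conjE)
  then show "\<exists>u\<in>homog G. u * u = u \<and> rideal_gen X = rideal_gen {u}" using homogI by blast
qed

lemma i_iiiL:
  assumes "graded_von_neumann_regular G"
  shows "\<forall>e X. m e e = e \<and> e \<noteq> z \<and> finite X \<and> X \<subseteq> homog G \<and>
                 (\<forall>x\<in>X. x \<noteq> 0 \<longrightarrow> m (ginv m (deg G x)) (deg G x) = e) \<longrightarrow>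
                 (\<exists>u\<in>homog G. u * u = u \<and> lideal_gen X = lideal_gen {u})"
proof (intro allI impI)
  fix e X
  assume h: "m e e = e \<and> e \<noteq> z \<and> finite X \<and> X \<subseteq> homog G \<and>
                 (\<forall>x\<in>X. x \<noteq> 0 \<longrightarrow> m (ginv m (deg G x)) (deg G x) = e)"
  then have "finite X" "X \<subseteq> homog G" "\<forall>x\<in>X. x \<noteq> 0 \<longrightarrow> m (ginv m (deg G x)) (deg G x) = e" by simp_all
  from iiiL_ind[OF assms this] obtain u where "u \<in> G e" "u * u = u" "lideal_gen X = lideal_gen {u}" by (elim bexE conjE)
  then show "\<exists>u\<in>homog G. u * u = u \<and> lideal_gen X = lideal_gen {u}" using homogI by blast
qed

lemma iiiR_iiR:
  assumes H: "\<forall>e X. m e e = e \<and> e \<noteq> z \<and> finite X \<and> X \<subseteq> homog G \<and>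
                 (\<forall>x\<in>X. x \<noteq> 0 \<longrightarrow> m (deg G x) (ginv m (deg G x)) = e) \<longrightarrow>
                 (\<exists>u\<in>homog G. u * u = u \<and> rideal_gen X = rideal_gen {u})"
  shows "\<forall>x\<in>homog G. \<exists>u\<in>homog G. u * u = u \<and> rideal_gen {x} = rideal_gen {u}"
proof
  fix x assume xh: "x \<in> homog G"
  show "\<exists>u\<in>homog G. u * u = u \<and> rideal_gen {x} = rideal_gen {u}"
  proof (cases "x = 0")
    case True then show ?thesis using xh by (intro bexI[of _ 0]) auto
  next
    case False
    obtain s where xs: "x \<in> G s" using xh unfolding homog_def by auto
    have s: "s \<noteq> z" using nz_deg xs False by blast
    have dx: "deg G x = s" using degI xs False by blast
    obtain e f where w: "lri_wit m s (ginv m s) e f" using ginv_wit[OF s] by blast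
    have "m e e = e" "m s (ginv m s) = e" "m e s = s" using w unfolding lri_wit_def by auto
    moreover then have "e \<noteq> z" using s mz by metis
    ultimately show ?thesis using H[rule_format, of e "{x}"] xh dx False by auto
  qed
qed

lemma iiiL_iiL:
  assumes H: "\<forall>e X. m e e = e \<and> e \<noteq> z \<and> finite X \<and> X \<subseteq> homog G \<and>
                 (\<forall>x\<in>X. x \<noteq> 0 \<longrightarrow> m (ginv m (deg G x)) (deg G x) = e) \<longrightarrow>
                 (\<exists>u\<in>homog G. u * u = u \<and> lideal_gen X = lideal_gen {u})"
  shows "\<forall>x\<in>homog G. \<exists>u\<in>homog G. u * u = u \<and> lideal_gen {x} = lideal_gen {u}"
proof
  fix x assume xh: "x \<in> homog G"
  show "\<exists>u\<in>homog G. u * u = u \<and> lideal_gen {x} = lideal_gen {u}"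
  proof (cases "x = 0")
    case True then show ?thesis using xh by (intro bexI[of _ 0]) auto
  next
    case False
    obtain s where xs: "x \<in> G s" using xh unfolding homog_def by auto
    have s: "s \<noteq> z" using nz_deg xs False by blast
    have dx: "deg G x = s" using degI xs False by blast
    obtain e f where w: "lri_wit m s (ginv m s) e f" using ginv_wit[OF s] by blast
    have "m f f = f" "m (ginv m s) s = f" "m s f = s" using w unfolding lri_wit_def by auto
    moreover then have "f \<noteq> z" using s mz by metis
    ultimately show ?thesis using H[rule_format, of f "{x}"] xh dx False by auto
  qed
qed

lemma iiR_i:
  assumes H: "\<forall>x\<in>homog G. \<exists>u\<in>homog G. u * u = u \<and> rideal_gen {x} = rideal_gen {u}"
  shows "graded_von_neumann_regular G"
  unfolding graded_von_neumann_regular_def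
proof
  fix x assume xh: "x \<in> homog G"
  obtain u where u: "u * u = u" "rideal_gen {x} = rideal_gen {u}" using H xh by blast
  obtain s where xs: "x \<in> G s" using xh unfolding homog_def by auto
  obtain b where b: "x * b = x" using N xs unfolding nearly_eps_strongly_graded_def by blast
  have "rideal_gen {x} \<subseteq> {x * c | c. True}"
    using principal_right[OF b] by (intro rg_least) auto
  moreover have "u \<in> rideal_gen {x}" using u(2) rg_sub by blast
  ultimately obtain c where c: "u = x * c" by blast
  have "rideal_gen {u} \<subseteq> {u * c | c. True}"
    using principal_right[OF u(1)] by (intro rg_least) auto
  moreover have "x \<in> rideal_gen {u}" using u(2) rg_sub by blast
  ultimately obtain d where d: "x = u * d" by blast
  have "x = u * x" using d u(1) by (metis mult.assoc)
  then show "\<exists>r. x = x * r * x" using c by blast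
qed

end

theorem proposition4p8:
  fixes m :: "'s \<Rightarrow> 's \<Rightarrow> 's" and z :: 's and G :: "'s \<Rightarrow> 'a::ring set"
  assumes "nearly_eps_strongly_graded m z G"
  shows "(graded_von_neumann_regular G \<longleftrightarrow>
           ((\<forall>x\<in>homog G. \<exists>u\<in>homog G. u * u = u \<and> rideal_gen {x} = rideal_gen {u}) \<and>
            (\<forall>x\<in>homog G. \<exists>u\<in>homog G. u * u = u \<and> lideal_gen {x} = lideal_gen {u})))
       \<and> (graded_von_neumann_regular G \<longleftrightarrow>
           ((\<forall>e X. m e e = e \<and> e \<noteq> z \<and> finite X \<and> X \<subseteq> homog G \<and>
                 (\<forall>x\<in>X. x \<noteq> 0 \<longrightarrow> m (deg G x) (ginv m (deg G x)) = e) \<longrightarrow>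
                 (\<exists>u\<in>homog G. u * u = u \<and> rideal_gen X = rideal_gen {u})) \<and>
            (\<forall>e X. m e e = e \<and> e \<noteq> z \<and> finite X \<and> X \<subseteq> homog G \<and>
                 (\<forall>x\<in>X. x \<noteq> 0 \<longrightarrow> m (ginv m (deg G x)) (deg G x) = e) \<longrightarrow>
                 (\<exists>u\<in>homog G. u * u = u \<and> lideal_gen X = lideal_gen {u}))))"
proof (rule conjI; rule iffI)
  assume v: "graded_von_neumann_regular G"
  show "(\<forall>x\<in>homog G. \<exists>u\<in>homog G. u * u = u \<and> rideal_gen {x} = rideal_gen {u}) \<and>
            (\<forall>x\<in>homog G. \<exists>u\<in>homog G. u * u = u \<and> lideal_gen {x} = lideal_gen {u})"
    using iiiR_iiR[OF assms i_iiiR[OF assms v]] iiiL_iiL[OF assms i_iiiL[OF assms v]] by (rule conjI)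
next
  assume "(\<forall>x\<in>homog G. \<exists>u\<in>homog G. u * u = u \<and> rideal_gen {x} = rideal_gen {u}) \<and>
            (\<forall>x\<in>homog G. \<exists>u\<in>homog G. u * u = u \<and> lideal_gen {x} = lideal_gen {u})"
  then show "graded_von_neumann_regular G" by (intro iiR_i[OF assms]) (elim conjE)
next
  assume v: "graded_von_neumann_regular G"
  show "(\<forall>e X. m e e = e \<and> e \<noteq> z \<and> finite X \<and> X \<subseteq> homog G \<and>
                 (\<forall>x\<in>X. x \<noteq> 0 \<longrightarrow> m (deg G x) (ginv m (deg G x)) = e) \<longrightarrow>
                 (\<exists>u\<in>homog G. u * u = u \<and> rideal_gen X = rideal_gen {u})) \<and>
            (\<forall>e X. m e e = e \<and> e \<noteq> z \<and> finite X \<and> X \<subseteq> homog G \<and>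
                 (\<forall>x\<in>X. x \<noteq> 0 \<longrightarrow> m (ginv m (deg G x)) (deg G x) = e) \<longrightarrow>
                 (\<exists>u\<in>homog G. u * u = u \<and> lideal_gen X = lideal_gen {u}))"
    using i_iiiR[OF assms v] i_iiiL[OF assms v] by (intro conjI)
next
  assume h: "(\<forall>e X. m e e = e \<and> e \<noteq> z \<and> finite X \<and> X \<subseteq> homog G \<and>
                 (\<forall>x\<in>X. x \<noteq> 0 \<longrightarrow> m (deg G x) (ginv m (deg G x)) = e) \<longrightarrow>
                 (\<exists>u\<in>homog G. u * u = u \<and> rideal_gen X = rideal_gen {u})) \<and>
            (\<forall>e X. m e e = e \<and> e \<noteq> z \<and> finite X \<and> X \<subseteq> homog G \<and>
                 (\<forall>x\<in>X. x \<noteq> 0 \<longrightarrow> m (ginv m (deg G x)) (deg G x) = e) \<longrightarrow>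
                 (\<exists>u\<in>homog G. u * u = u \<and> lideal_gen X = lideal_gen {u}))"
  show "graded_von_neumann_regular G"
    by (rule iiR_i[OF assms iiiR_iiR[OF assms h[THEN conjunct1]]])
qed

end
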